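(* Let $\mathbf{f}$ be a simple problem and $\mathbf{g},\mathbf{h}$ subproblems with $\mathbf{h}\subsetneq\mathbf{g}\subseteq\mathbf{f}$. Then $\partial\,\mathbf{f}X^*(\mathbf{g})\supseteq\mathbf{f}X^*(\mathbf{h})$.
   Context: A problem is a finite set $\mathbf{f}=\{f_1,\dots,f_m\}$ of functions $f_i:\mathbb{R}^n\to\mathbb{R}$ together with a feasible region $X\subseteq\mathbb{R}^n$, to be minimized simultaneously; its evaluation map is $x\mapsto(f_1(x),\dots,f_m(x))$. A subproblem $\mathbf{g}\subseteq\mathbf{f}$ is a subset of these functions (including $\emptyset$ and $\mathbf{f}$), with the same $X$; its evaluation map is $x\mapsto(f_i(x))_{f_i\in\mathbf{g}}\in\mathbb{R}^{|\mathbf{g}|}$. The Pareto set $X^*(\mathbf{g})$ is the set of $x^*\in X$ for which there is no $x\in X$ with $f_i(x)\le f_i(x^* )$ for all $f_i\in\mathbf{g}$ and $f_j(x)<f_j(x^* )$ for some $f_j\in\mathbf{g}$; by convention $X^*(\emptyset)=\emptyset$. $\mathbf{f}X^*(\mathbf{g})$ denotes the image of $X^*(\mathbf{g})$ under the evaluation map of $\mathbf{f}$. A problem $\mathbf{f}$ is simple if every subproblem $\mathbf{g}\subseteq\mathbf{f}$ with $k=|\mathbf{g}|$ objectives satisfies: (S1) $X^*(\mathbf{g})$ is homeomorphic to $\Delta^{k-1}=\{t\in[0,1]^k:\sum t_i=1\}$ (with $\Delta^{-1}=\emptyset$); (S2) the evaluation map of $\mathbf{g}$ restricted to $X^*(\mathbf{g})$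 is a topological embedding into $\mathbb{R}^k$. For a simple problem, each $\mathbf{f}X^*(\mathbf{g})$ is homeomorphic to $\Delta^{|\mathbf{g}|-1}$, hence a topological manifold with boundary; $\operatorname{Int}$ and $\partial$ denote its manifold interior and manifold boundary (for a single point, the interior is the point and the boundary is empty). All sets carry the subspace topology from Euclidean space. *)

theory Defs
  imports "HOL-Analysis.Analysis"
begin

text \<open>Points of objective space are represented as functions from the
set of objectives to real (zero outside the subproblem), with the product topology,
which on the finitely many relevant coordinates is the Euclidean topology.\<close>

type_synonym 'n objective = "real^'n \<Rightarrow> real"

definition eval_map :: "'n objective set \<Rightarrow> real^'n \<Rightarrow> ('n objective \<Rightarrow> real)" where
  "eval_map g x = (\<lambda>\<phi>. if \<phi> \<in> g then \<phi> x else 0)"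

definition pareto_set :: "(real^'n) set \<Rightarrow> 'n objective set \<Rightarrow> (real^'n) set" where
  "pareto_set X g = (if g = {} then {} else
     {xs \<in> X. \<not> (\<exists>x\<in>X. (\<forall>\<phi>\<in>g. \<phi> x \<le> \<phi> xs) \<and> (\<exists>\<phi>\<in>g. \<phi> x < \<phi> xs))})"

text \<open>Standard simplex with vertices indexed by g; homeomorphic to Delta^(|g|-1), empty for g empty.\<close>
definition std_simplex :: "'a set \<Rightarrow> ('a \<Rightarrow> real) set" where
  "std_simplex g = {t. (\<forall>i. i \<notin> g \<longrightarrow> t i = 0) \<and> (\<forall>i\<in>g. 0 \<le> t i) \<and> sum t g = 1}"

definition simple_problem :: "(real^'n) set \<Rightarrow> 'n objective set \<Rightarrow> bool" where
  "simple_problem X f \<longleftrightarrow> finite f \<and>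
     (\<forall>g\<subseteq>f. pareto_set X g homeomorphic std_simplex g \<and>
        (\<exists>e'. homeomorphism (pareto_set X g) (eval_map g ` pareto_set X g) (eval_map g) e'))"

text \<open>R^d as the subspace of nat => real with coordinates >= d vanishing.\<close>
definition euclid_space :: "nat \<Rightarrow> (nat \<Rightarrow> real) set" where
  "euclid_space d = {v. \<forall>i\<ge>d. v i = 0}"

definition manifold_interior :: "nat \<Rightarrow> 'a::topological_space set \<Rightarrow> 'a set" where
  "manifold_interior d S = {x \<in> S. \<exists>U V. openin (top_of_set S) U \<and> x \<in> U \<and>
       openin (top_of_set (euclid_space d)) V \<and> U homeomorphic V}"

definition manifold_boundary :: "nat \<Rightarrow> 'a::topological_space set \<Rightarrow> 'a set" where
  "manifold_boundary d S = S - manifold_interior d S"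

end

theory Submission
  imports Defs "HOL-Homology.Invariance_of_Domain"
begin

lemma Euclid_eq: "Euclidean_space d = top_of_set (euclid_space d)"
  by (simp add: Euclidean_space_def euclid_space_def euclidean_product_topology)

lemma simple_inj:
  assumes "simple_problem X f" "g \<subseteq> f"
  shows "inj_on (eval_map g) (pareto_set X g)"
proof -
  obtain e' where "homeomorphism (pareto_set X g) (eval_map g ` pareto_set X g) (eval_map g) e'"
    using assms unfolding simple_problem_def by blast
  then show ?thesis by (metis homeomorphism_apply1 inj_on_inverseI)
qed

lemma pareto_sub:
  assumes "simple_problem X f" "h \<subseteq> g" "g \<subseteq> f"
  shows "pareto_set X h \<subseteq> pareto_set X g"
proof
  fix y assume y: "y \<in> pareto_set X h"
  then have hne: "h \<noteq> {}" by (auto simp: pareto_set_def)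
  then have gne: "g \<noteq> {}" using assms by auto
  from y hne have yX: "y \<in> X" and ynd: "\<not> (\<exists>x\<in>X. (\<forall>\<phi>\<in>h. \<phi> x \<le> \<phi> y) \<and> (\<exists>\<phi>\<in>h. \<phi> x < \<phi> y))"
    by (auto simp: pareto_set_def)
  have injh: "inj_on (eval_map h) (pareto_set X h)"
    using simple_inj assms by blast
  show "y \<in> pareto_set X g"
  proof (rule ccontr)
    assume "y \<notin> pareto_set X g"
    then obtain x where xX: "x \<in> X" and le: "\<forall>\<phi>\<in>g. \<phi> x \<le> \<phi> y" and lt: "\<exists>\<phi>\<in>g. \<phi> x < \<phi> y"
      using gne yX by (auto simp: pareto_set_def)
    have le_h: "\<forall>\<phi>\<in>h. \<phi> x \<le> \<phi> y" using le assms(2) by blast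
    have nlt: "\<not> (\<exists>\<phi>\<in>h. \<phi> x < \<phi> y)" using ynd xX le_h by blast
    have eqh: "\<forall>\<phi>\<in>h. \<phi> x = \<phi> y"
    proof
      fix \<phi> assume "\<phi> \<in> h"
      then have "\<phi> x \<le> \<phi> y" "\<not> \<phi> x < \<phi> y" using le_h nlt by blast+
      then show "\<phi> x = \<phi> y" by simp
    qed
    have xP: "x \<in> pareto_set X h"
    proof -
      have "\<not> (\<exists>z\<in>X. (\<forall>\<phi>\<in>h. \<phi> z \<le> \<phi> x) \<and> (\<exists>\<phi>\<in>h. \<phi> z < \<phi> x))"
      proof
        assume "\<exists>z\<in>X. (\<forall>\<phi>\<in>h. \<phi> z \<le> \<phi> x) \<and> (\<exists>\<phi>\<in>h. \<phi> z < \<phi> x)"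
        then obtain z where z: "z \<in> X" "\<forall>\<phi>\<in>h. \<phi> z \<le> \<phi> x" "\<exists>\<phi>\<in>h. \<phi> z < \<phi> x"
          by blast
        have "\<forall>\<phi>\<in>h. \<phi> z \<le> \<phi> y" "\<exists>\<phi>\<in>h. \<phi> z < \<phi> y"
        proof -
          show "\<forall>\<phi>\<in>h. \<phi> z \<le> \<phi> y"
          proof
            fix \<phi> assume ph: "\<phi> \<in> h"
            then have "\<phi> z \<le> \<phi> x" "\<phi> x = \<phi> y" using z(2) eqh by blast+
            then show "\<phi> z \<le> \<phi> y" by simp
          qed
          obtain \<phi> where "\<phi> \<in> h" "\<phi> z < \<phi> x" using z(3) by blast
          moreover then have "\<phi> x = \<phi> y" using eqh by blast
          ultimately show "\<exists>\<phi>\<in>h. \<phi> z < \<phi> y" by auto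
        qed
        then show False using ynd z(1) by blast
      qed
      then show ?thesis using xX hne by (simp add: pareto_set_def)
    qed
    have "eval_map h x = eval_map h y" using eqh by (auto simp: eval_map_def)
    then have "x = y" using injh xP y by (meson inj_onD)
    then show False using lt by auto
  qed
qed

theorem lemma3:
  fixes X :: "(real^'n) set" and f g h :: "'n objective set"
  assumes "simple_problem X f" and "h \<subset> g" and "g \<subseteq> f"
  shows "eval_map f ` pareto_set X h
           \<subseteq> manifold_boundary (card g - 1) (eval_map f ` pareto_set X g)"
proof
  fix yy assume "yy \<in> eval_map f ` pareto_set X h"
  then obtain y where y: "y \<in> pareto_set X h" and yy: "yy = eval_map f y" by blast
  define Pg where "Pg = pareto_set X g"
  define S where "S = eval_map f ` Pg"
  have hne: "h \<noteq> {}" using y by (auto simp: pareto_set_def)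
  from y hne have yX: "y \<in> X" and ynd: "\<not> (\<exists>x\<in>X. (\<forall>\<phi>\<in>h. \<phi> x \<le> \<phi> y) \<and> (\<exists>\<phi>\<in>h. \<phi> x < \<phi> y))"
    by (auto simp: pareto_set_def)
  have yPg: "y \<in> Pg" using pareto_sub[of X f h g] assms y Pg_def by auto
  have yyS: "yy \<in> S" using yPg yy S_def by auto
  have fin: "finite g" using assms(1,3) unfolding simple_problem_def using finite_subset by blast
  obtain j where j: "j \<in> g" "j \<notin> h" using assms(2) by blast
  define d where "d = card g - 1"
  have dcard: "card (g - {j}) = d" using j fin d_def by simp
  obtain e where e: "bij_betw e {0..<d} (g - {j})"
    using ex_bij_betw_nat_finite[of "g - {j}"] fin dcard by auto
  have gne: "g \<noteq> {}" using j by auto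
  have injg: "inj_on (eval_map g) Pg" using simple_inj assms Pg_def by blast
  have Pg_nd: "\<And>x' x. x' \<in> Pg \<Longrightarrow> x \<in> X \<Longrightarrow> \<not> ((\<forall>\<phi>\<in>g. \<phi> x \<le> \<phi> x') \<and> (\<exists>\<phi>\<in>g. \<phi> x < \<phi> x'))"
    using gne by (auto simp: Pg_def pareto_set_def)
  have PgX: "Pg \<subseteq> X" using gne by (auto simp: Pg_def pareto_set_def)
  have hsub: "h \<subseteq> g - {j}" using assms(2) j by auto
  have gf: "\<And>i x. i \<in> g \<Longrightarrow> eval_map f x i = i x" using assms(3) by (auto simp: eval_map_def)
  define \<psi> where "\<psi> = (\<lambda>q::'n objective \<Rightarrow> real. \<lambda>n::nat. if n < d then q (e n) else 0)"
  have \<psi>E: "\<psi> q \<in> euclid_space d" for q by (simp add: \<psi>_def euclid_space_def)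
  have \<psi>cont: "continuous_on A \<psi>" for A
    unfolding \<psi>_def
  proof (intro continuous_on_coordinatewise_then_product)
    fix i show "continuous_on A (\<lambda>x. if i < d then x (e i) else 0)"
    proof (cases "i < d")
      case True
      have "continuous_on A (\<lambda>x::'n objective \<Rightarrow> real. x (e i))"
        by (rule continuous_on_product_then_coordinatewise[OF continuous_on_id])
      then show ?thesis using True by simp
    next
      case False then show ?thesis by simp
    qed
  qed
  have \<psi>inj: "inj_on \<psi> S"
  proof (rule inj_onI)
    fix q q' assume q: "q \<in> S" and q': "q' \<in> S" and eq: "\<psi> q = \<psi> q'"
    obtain x where x: "x \<in> Pg" "q = eval_map f x" using q S_def by auto
    obtain x' where x': "x' \<in> Pg" "q' = eval_map f x'" using q' S_def by auto
    have oth: "i x = i x'" if ig: "i \<in> g - {j}" for i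
    proof -
      obtain n where n: "n < d" "i = e n" using e that
      proof -
        have "e ` {0..<d} = g - {j}" using e by (simp add: bij_betw_def)
        then have "i \<in> e ` {0..<d}" using ig by simp
        then show ?thesis using that by auto
      qed
      have "\<psi> q n = \<psi> q' n" using eq by simp
      then show ?thesis using n x x' gf that by (simp add: \<psi>_def)
    qed
    have "j x = j x'"
    proof (rule ccontr)
      assume ne: "j x \<noteq> j x'"
      show False
      proof (cases "j x < j x'")
        case True
        have "\<forall>\<phi>\<in>g. \<phi> x \<le> \<phi> x'"
        proof
          fix \<phi> assume "\<phi> \<in> g" then show "\<phi> x \<le> \<phi> x'"
          proof (cases "\<phi> = j")
            case False then have "\<phi> x = \<phi> x'" using oth \<open>\<phi> \<in> g\<close> by blast
            then show ?thesis by simp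
          qed (use True in simp)
        qed
        then show ?thesis using Pg_nd[of x' x] x x' PgX True j(1) by blast
      next
        case False
        then have "j x' < j x" using ne by simp
        have "\<forall>\<phi>\<in>g. \<phi> x' \<le> \<phi> x"
        proof
          fix \<phi> assume "\<phi> \<in> g" then show "\<phi> x' \<le> \<phi> x"
          proof (cases "\<phi> = j")
            case False then have "\<phi> x = \<phi> x'" using oth \<open>\<phi> \<in> g\<close> by blast
            then show ?thesis by simp
          qed (use \<open>j x' < j x\<close> in simp)
        qed
        then show ?thesis using Pg_nd[of x x'] x x' PgX \<open>j x' < j x\<close> j(1) by blast
      qed
    qed
    then have "\<forall>i\<in>g. i x = i x'" using oth by blast
    then have "eval_map g x = eval_map g x'" by (auto simp: eval_map_def)
    then have "x = x'" using injg x x' by (meson inj_onD)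
    then show "q = q'" using x x' by simp
  qed
  have "yy \<notin> manifold_interior d S"
  proof
    assume "yy \<in> manifold_interior d S"
    then obtain U V where U: "openin (top_of_set S) U" "yy \<in> U"
      and V: "openin (top_of_set (euclid_space d)) V" and UV: "U homeomorphic V"
      by (auto simp: manifold_interior_def)
    obtain a b where hab: "homeomorphism U V a b" using UV homeomorphic_def by blast
    have US: "U \<subseteq> S" using U by (meson openin_imp_subset)
    have VE: "V \<subseteq> euclid_space d" using V by (meson openin_imp_subset)
    have bV: "b ` V = U" and bc: "continuous_on V b" using hab by (auto simp: homeomorphism_def)
    have cm: "continuous_map (subtopology (Euclidean_space d) V) (Euclidean_space d) (\<psi> \<circ> b)"
    proof -
      have "subtopology (Euclidean_space d) V = top_of_set V"
        using VE by (simp add: Euclid_eq subtopology_subtopology inf.absorb2)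
      moreover have "continuous_on V (\<psi> \<circ> b)"
        by (rule continuous_on_compose[OF bc \<psi>cont])
      ultimately show ?thesis
        by (simp add: Euclid_eq continuous_map_in_subtopology \<psi>E Pi_iff)
    qed
    have injc: "inj_on (\<psi> \<circ> b) V"
    proof -
      have "inj_on b V" 
        by (rule inj_on_inverseI[where g=a]) (rule homeomorphism_apply2[OF hab])
      moreover have "inj_on \<psi> (b ` V)" using \<psi>inj bV US inj_on_subset by blast
      ultimately show ?thesis by (simp add: comp_inj_on)
    qed
    have "openin (Euclidean_space d) ((\<psi> \<circ> b) ` V)"
      by (rule invariance_of_domain_Euclidean_space[OF _ cm injc]) (use V Euclid_eq in simp)
    then have opn: "openin (top_of_set (euclid_space d)) (\<psi> ` U)"
    proof -
      have "(\<psi> \<circ> b) ` V = \<psi> ` U" using bV image_comp[of \<psi> b V] by simp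
      then show ?thesis using \<open>openin (Euclidean_space d) ((\<psi> \<circ> b) ` V)\<close> by (simp add: Euclid_eq)
    qed
    then obtain T where T: "open T" "\<psi> ` U = T \<inter> euclid_space d"
      by (auto simp: openin_open)
    define \<gamma> where "\<gamma> = (\<lambda>t::real. \<lambda>n::nat. \<psi> yy n - t * (if n < d then 1 else 0))"
    have \<gamma>c: "continuous_on UNIV \<gamma>"
      unfolding \<gamma>_def by (intro continuous_on_coordinatewise_then_product) (auto intro!: continuous_intros)
    have \<gamma>E: "\<gamma> t \<in> euclid_space d" for t by (simp add: \<gamma>_def \<psi>_def euclid_space_def)
    have "open (\<gamma> -` T)" using open_vimage[OF T(1) \<gamma>c] .
    moreover have "0 \<in> \<gamma> -` T"
    proof -
      have "\<gamma> 0 = \<psi> yy" by (simp add: \<gamma>_def)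
      then show ?thesis using T U(2) by auto
    qed
    ultimately obtain r where r: "r > 0" "ball 0 r \<subseteq> \<gamma> -` T"
      by (meson open_contains_ball)
    have "r/2 \<in> ball 0 r" using r by (simp add: dist_real_def)
    then have "\<gamma> (r/2) \<in> T" using r by blast
    then have "\<gamma> (r/2) \<in> \<psi> ` U" using T \<gamma>E by auto
    then obtain q where q: "q \<in> U" "\<psi> q = \<gamma> (r/2)" by auto
    obtain x where x: "x \<in> Pg" "q = eval_map f x" using q US S_def by auto
    have less: "i x < i y" if "i \<in> h" for i
    proof -
      have ig: "i \<in> g - {j}" using that hsub by auto
      obtain n where n: "n < d" "i = e n" using e ig
      proof -
        have "e ` {0..<d} = g - {j}" using e by (simp add: bij_betw_def)
        then have "i \<in> e ` {0..<d}" using ig by simp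
        then show ?thesis using that by auto
      qed
      have "\<psi> q n = \<gamma> (r/2) n" using q by simp
      then have "i x = i y - r/2" using n x yy gf ig by (simp add: \<psi>_def \<gamma>_def)
      then show ?thesis using r by simp
    qed
    have "x \<in> X" using x PgX by auto
    moreover have "\<forall>\<phi>\<in>h. \<phi> x \<le> \<phi> y" using less by (simp add: less_imp_le)
    moreover obtain \<phi> where "\<phi> \<in> h" using hne by blast
    ultimately show False using ynd less by blast
  qed
  then show "yy \<in> manifold_boundary (card g - 1) (eval_map f ` pareto_set X g)"
    using yyS by (simp add: manifold_boundary_def S_def Pg_def d_def)
qed

end
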